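(* Let $N=r+1$ and let $M_n:=M_{1,n}$ and $M_{\alpha,n}$ ($\alpha\in[1,N]$, $n\in\mathbb Z$) be the difference operators $$M_{\alpha,n}=\sum_{I\subset[1,N],\,|I|=\alpha}x_I^{\,n}\prod_{i\in I,\ j\notin I}\frac{x_i}{x_i-x_j}\,\Gamma_I,$$ with $x_I=\prod_{i\in I}x_i$, $\Gamma_I=\prod_{i\in I}\Gamma_i$, $(\Gamma_if)(x)=f(\dots,qx_i,\dots)$. Let $m(u)=\sum_{n\in\mathbb{Z}}u^nM_n$. Then for every $\alpha\in[1,N]$ and $n\in\mathbb{Z}$, $M_{\alpha,n}$ equals the coefficient of $(u_1u_2\cdots u_\alpha)^n$ in the formal series $$\prod_{1\le i<j\le\alpha}\Big(1-q\frac{u_j}{u_i}\Big)\,m(u_1)m(u_2)\cdots m(u_\alpha),$$ i.e. $\sum_{\alpha\text{-}\mathrm{currents}}\,$: $M_{\alpha,n}=\sum_{S}c_S\,M_{n+s_1}\cdots M_{n+s_\alpha}$ where $\prod_{i<j}(1-qu_j/u_i)=\sum_S c_S\prod_i u_i^{-s_i}$. Equivalently, with $m_\alpha(z)=\sum_nz^nM_{\alpha,n}$, $m_\alpha$ is obtained from this series by extracting the coefficients of $(u_1\cdots u_\alpha)^n$.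
   Context: The operators act on symmetric functions in $x_1,\dots,x_N$. The product $\prod_{i<j}(1-qu_j/u_i)$ is a Laurent polynomial, so each coefficient extraction is a finite sum of ordered products of the operators $M_n$. *)

theory Defs
  imports "HOL-Combinatorics.Permutations"
begin

text \<open>Points are x :: nat => 'a; only coordinates 0..N-1 (i.e. x_1..x_N) are used.
Functions are f :: (nat => 'a) => 'a.\<close>

definition x_I :: "nat set \<Rightarrow> (nat \<Rightarrow> 'a::field) \<Rightarrow> 'a" where
  "x_I I x = (\<Prod>i\<in>I. x i)"

definition Gamma :: "'a::field \<Rightarrow> nat set \<Rightarrow> ((nat \<Rightarrow> 'a) \<Rightarrow> 'a) \<Rightarrow> (nat \<Rightarrow> 'a) \<Rightarrow> 'a" where
  "Gamma q I f x = f (\<lambda>k. if k \<in> I then q * x k else x k)"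

definition Mop :: "'a::field \<Rightarrow> nat \<Rightarrow> nat \<Rightarrow> int \<Rightarrow> ((nat \<Rightarrow> 'a) \<Rightarrow> 'a) \<Rightarrow> (nat \<Rightarrow> 'a) \<Rightarrow> 'a" where
  "Mop q N \<alpha> n f x =
     (\<Sum>I\<in>{I. I \<subseteq> {..<N} \<and> card I = \<alpha>}.
        (x_I I x) powi n
        * (\<Prod>i\<in>I. \<Prod>j\<in>{..<N} - I. x i / (x i - x j))
        * Gamma q I f x)"

abbreviation M1 :: "'a::field \<Rightarrow> nat \<Rightarrow> int \<Rightarrow> ((nat \<Rightarrow> 'a) \<Rightarrow> 'a) \<Rightarrow> (nat \<Rightarrow> 'a) \<Rightarrow> 'a" where
  "M1 q N n \<equiv> Mop q N 1 n"

text \<open>Expansion of prod_{0<=i<j<alpha} (1 - q u_j/u_i): choosing a set P of pairs (i,j)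
from which the term -q u_j u_i^{-1} is taken gives the monomial prod_k u_k^{-s_k} with
s_k = #{(k,j) in P} - #{(i,k) in P}, and coefficient (-q)^|P|.\<close>
definition pairs :: "nat \<Rightarrow> (nat \<times> nat) set" where
  "pairs \<alpha> = {(i,j). i < j \<and> j < \<alpha>}"

definition sexp :: "(nat \<times> nat) set \<Rightarrow> nat \<Rightarrow> int" where
  "sexp P k = int (card {j. (k,j) \<in> P}) - int (card {i. (i,k) \<in> P})"

definition coeffS :: "'a::field \<Rightarrow> nat \<Rightarrow> (nat \<Rightarrow> int) \<Rightarrow> 'a" where
  "coeffS q \<alpha> S = (\<Sum>P\<in>{P. P \<subseteq> pairs \<alpha> \<and> sexp P = S}. (- q) ^ card P)"

definition suppS :: "nat \<Rightarrow> (nat \<Rightarrow> int) set" where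
  "suppS \<alpha> = sexp ` Pow (pairs \<alpha>)"

definition Mprod :: "'a::field \<Rightarrow> nat \<Rightarrow> nat \<Rightarrow> int \<Rightarrow> (nat \<Rightarrow> int)
     \<Rightarrow> ((nat \<Rightarrow> 'a) \<Rightarrow> 'a) \<Rightarrow> (nat \<Rightarrow> 'a) \<Rightarrow> 'a" where
  "Mprod q N \<alpha> n S f = foldr (\<lambda>k g. M1 q N (n + S k) g) [0..<\<alpha>] f"

definition symmetric_fun :: "nat \<Rightarrow> ((nat \<Rightarrow> 'a) \<Rightarrow> 'b) \<Rightarrow> bool" where
  "symmetric_fun N f \<longleftrightarrow> (\<forall>\<sigma> x. \<sigma> permutes {..<N} \<longrightarrow> f (x \<circ> \<sigma>) = f x)"

text \<open>Generic points: all denominators occurring in products of at most N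
operators are nonzero, and negative powers are defined.\<close>
definition generic_pt :: "'a::field \<Rightarrow> nat \<Rightarrow> (nat \<Rightarrow> 'a) \<Rightarrow> bool" where
  "generic_pt q N x \<longleftrightarrow> q \<noteq> 0 \<and> (\<forall>i<N. x i \<noteq> 0) \<and>
     (\<forall>i<N. \<forall>j<N. \<forall>a\<le>N. \<forall>b\<le>N. i \<noteq> j \<longrightarrow> q ^ a * x i \<noteq> q ^ b * x j)"

end

theory Submission
  imports Defs
begin


definition pt :: "'a::field \<Rightarrow> (nat\<Rightarrow>'a) \<Rightarrow> nat list \<Rightarrow> nat \<Rightarrow> 'a" where
  "pt q y is = (\<lambda>j. q ^ count_list is j * y j)"
definition cM :: "nat \<Rightarrow> (nat\<Rightarrow>'a::field) \<Rightarrow> nat \<Rightarrow> 'a" where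
  "cM N y i = (\<Prod>j\<in>{..<N}-{i}. y i / (y i - y j))"
fun TT :: "'a::field \<Rightarrow> nat \<Rightarrow> (nat\<Rightarrow>'a) \<Rightarrow> nat list \<Rightarrow> 'a" where
  "TT q N y [] = 1"
| "TT q N y (i#is) = cM N y i * TT q N (pt q y [i]) is"
definition vv :: "'a::field \<Rightarrow> (nat\<Rightarrow>'a) \<Rightarrow> nat list \<Rightarrow> nat \<Rightarrow> 'a" where
  "vv q y is k = pt q y (take k is) (is!k)"
definition Mlist :: "'a::field \<Rightarrow> nat \<Rightarrow> int list \<Rightarrow> ((nat \<Rightarrow> 'a) \<Rightarrow> 'a) \<Rightarrow> (nat \<Rightarrow> 'a) \<Rightarrow> 'a" where
  "Mlist q N es g = foldr (\<lambda>e h. M1 q N e h) es g"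
definition LL :: "nat \<Rightarrow> nat \<Rightarrow> nat list set" where
  "LL N m = {is. set is \<subseteq> {..<N} \<and> length is = m}"

lemma pt_append: "pt q y (a @ b) = pt q (pt q y a) b"
  by (auto simp: pt_def power_add fun_eq_iff)

lemma pt_Cons: "pt q y (i # b) = pt q (pt q y [i]) b"
  using pt_append[of q y "[i]" b] by simp

lemma pt_Nil[simp]: "pt q y [] = y"
  by (simp add: pt_def)

lemma Gamma_single: "Gamma q {i} g y = g (pt q y [i])"
  unfolding Gamma_def pt_def by (rule arg_cong[where f=g]) auto

lemma M1_expand: "Mop q N 1 e g y = (\<Sum>i<N. y i powi e * cM N y i * g (pt q y [i]))"
proof -
  have S: "{I. I \<subseteq> {..<N} \<and> card I = 1} = (\<lambda>i. {i}) ` {..<N}"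
    by (auto simp: card_1_singleton_iff)
  show ?thesis unfolding Mop_def S
    by (subst sum.reindex) (auto simp: inj_on_def x_I_def cM_def Gamma_single)
qed

lemma LL_Suc: "LL N (Suc m) = (\<lambda>(xs, n). n#xs) ` (LL N m \<times> {..<N})"
  unfolding LL_def by (rule lists_length_Suc_eq)

lemma finite_LL: "finite (LL N m)"
  unfolding LL_def by (rule finite_lists_length_eq) simp

lemma Mlist_expand:
  "Mlist q N es g y = (\<Sum>is\<in>LL N (length es).
      (\<Prod>k<length es. vv q y is k powi (es!k)) * TT q N y is * g (pt q y is))"
proof (induction es arbitrary: y)
  case Nil
  have "LL N 0 = {[]}" by (auto simp: LL_def)
  then show ?case by (simp add: Mlist_def)
next
  case (Cons e es)
  have "Mlist q N (e#es) g y = Mop q N 1 e (Mlist q N es g) y"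
    by (simp add: Mlist_def)
  also have "\<dots> = (\<Sum>i<N. y i powi e * cM N y i * Mlist q N es g (pt q y [i]))"
    by (rule M1_expand)
  also have "\<dots> = (\<Sum>i<N. \<Sum>is\<in>LL N (length es). 
        (\<Prod>k<length (e#es). vv q y (i#is) k powi ((e#es)!k)) * TT q N y (i#is) * g (pt q y (i#is)))"
  proof (rule sum.cong[OF refl])
    fix i assume "i \<in> {..<N}"
    have vv0: "vv q y (i#zs) 0 = y i" for zs by (simp add: vv_def pt_def)
    have vvS: "vv q y (i#zs) (Suc k) = vv q (pt q y [i]) zs k" for zs k
      by (simp add: vv_def pt_append[symmetric])
    have "(i # is') = [i] @ is'" for is' by simp
    show "y i powi e * cM N y i * Mlist q N es g (pt q y [i]) = (\<Sum>is\<in>LL N (length es). 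
        (\<Prod>k<length (e#es). vv q y (i#is) k powi ((e#es)!k)) * TT q N y (i#is) * g (pt q y (i#is)))"
      unfolding Cons.IH sum_distrib_left
      apply (rule sum.cong[OF refl])
      apply (simp only: length_Cons prod.lessThan_Suc_shift vv0 vvS nth_Cons_0 nth_Cons_Suc TT.simps)
      by (simp add: algebra_simps pt_Cons[symmetric])
  qed
  also have "\<dots> = (\<Sum>is\<in>LL N (length (e#es)).
      (\<Prod>k<length (e#es). vv q y is k powi ((e#es)!k)) * TT q N y is * g (pt q y is))"
  proof -
    let ?F = "\<lambda>is. (\<Prod>k<length (e#es). vv q y is k powi ((e#es)!k)) * TT q N y is * g (pt q y is)"
    have "(\<Sum>i<N. \<Sum>is\<in>LL N (length es). ?F (i#is)) = (\<Sum>is\<in>LL N (length es). \<Sum>i<N. ?F (i#is))"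
      by (rule sum.swap)
    also have "\<dots> = (\<Sum>p\<in>LL N (length es) \<times> {..<N}. ?F (snd p # fst p))"
      by (simp add: sum.cartesian_product split_def)
    also have "\<dots> = sum ?F ((\<lambda>(xs, n). n#xs) ` (LL N (length es) \<times> {..<N}))"
      by (subst sum.reindex) (auto simp: inj_on_def split_def)
    finally show ?thesis by (simp only: length_Cons LL_Suc)
  qed
  finally show ?case .
qed

lemma finite_pairs: "finite (pairs \<alpha>)"
proof -
  have "pairs \<alpha> \<subseteq> {..<\<alpha>} \<times> {..<\<alpha>}" by (auto simp: pairs_def)
  then show ?thesis by (rule finite_subset) auto
qed

lemma sexp_empty[simp]: "sexp {} k = 0"
  by (simp add: sexp_def)

lemma sexp_insert:
  assumes "finite P" "(a,b) \<notin> P" "a \<noteq> b"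
  shows "sexp (insert (a,b) P) k = sexp P k + (if k = a then 1 else 0) - (if k = b then 1 else 0)"
proof -
  have f1: "finite {j. (k,j) \<in> P}"
  proof (rule finite_subset[of _ "snd ` P"])
    show "{j. (k,j) \<in> P} \<subseteq> snd ` P" by force
  qed (simp add: assms(1))
  have f2: "finite {i. (i,k) \<in> P}"
  proof (rule finite_subset[of _ "fst ` P"])
    show "{j. (j,k) \<in> P} \<subseteq> fst ` P" by force
  qed (simp add: assms(1))
  have c1: "card {j. (k,j) \<in> insert (a,b) P} = card {j. (k,j) \<in> P} + (if k = a then 1 else 0)"
  proof (cases "k = a")
    case True
    then have "{j. (k,j) \<in> insert (a,b) P} = insert b {j. (k,j) \<in> P}" by auto
    then show ?thesis using True f1 assms(2) by simp
  next
    case False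
    then have "{j. (k,j) \<in> insert (a,b) P} = {j. (k,j) \<in> P}" by auto
    then show ?thesis using False by simp
  qed
  have c2: "card {i. (i,k) \<in> insert (a,b) P} = card {i. (i,k) \<in> P} + (if k = b then 1 else 0)"
  proof (cases "k = b")
    case True
    then have "{i. (i,k) \<in> insert (a,b) P} = insert a {i. (i,k) \<in> P}" by auto
    then show ?thesis using True f2 assms(2) by simp
  next
    case False
    then have "{i. (i,k) \<in> insert (a,b) P} = {i. (i,k) \<in> P}" by auto
    then show ?thesis using False by simp
  qed
  show ?thesis unfolding sexp_def c1 c2 by simp
qed

lemma sexp_prod:
  fixes v :: "nat \<Rightarrow> 'a::field"
  assumes "P \<subseteq> pairs \<alpha>" and nz: "\<forall>k<\<alpha>. v k \<noteq> 0"
  shows "(\<Prod>k<\<alpha>. v k powi (sexp P k)) = (\<Prod>p\<in>P. v (fst p) / v (snd p))"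
proof -
  have "finite P" using assms(1) finite_pairs finite_subset by blast
  then show ?thesis using assms(1)
  proof (induction P rule: finite_subset_induct)
    case empty
    then show ?case by simp
  next
    case (insert p P)
    obtain a b where p: "p = (a,b)" by (cases p)
    have ab: "a < b" "b < \<alpha>" using insert(2) p by (auto simp: pairs_def)
    have "(\<Prod>k<\<alpha>. v k powi (sexp (insert p P) k))
        = (\<Prod>k<\<alpha>. v k powi (sexp P k) * ((if k = a then v k else 1) * (if k = b then inverse (v k) else 1)))"
    proof (rule prod.cong[OF refl])
      fix k assume k: "k \<in> {..<\<alpha>}"
      have "v k powi (sexp (insert p P) k) = v k powi (sexp P k) * v k powi ((if k = a then 1 else 0) - (if k = b then 1 else 0))"
      proof -
        have vk: "v k \<noteq> 0" using nz k by auto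
        have "sexp (insert p P) k = sexp P k + ((if k = a then 1 else 0) - (if k = b then 1 else 0))"
          unfolding p using sexp_insert[OF insert(1), of a b k] insert(3) ab p by simp
        then show ?thesis using power_int_add[of "v k"] vk by simp
      qed
      also have "\<dots> = v k powi (sexp P k) * ((if k = a then v k else 1) * (if k = b then inverse (v k) else 1))"
        using ab nz[rule_format, OF ab(2)]
        by (cases "k = a"; cases "k = b") (simp_all add: power_int_diff[of "v b"] divide_inverse)
      finally show "v k powi (sexp (insert p P) k) = v k powi (sexp P k) * ((if k = a then v k else 1) * (if k = b then inverse (v k) else 1))" .
    qed
    also have "\<dots> = (\<Prod>k<\<alpha>. v k powi (sexp P k)) * (v a * inverse (v b))"
      using ab by (simp add: prod.distrib prod.delta)
    also have "\<dots> = (\<Prod>p\<in>insert p P. v (fst p) / v (snd p))"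
      using insert p by (simp add: divide_inverse mult.commute)
    finally show ?case .
  qed
qed

lemma Psum:
  fixes v :: "nat \<Rightarrow> 'a::field"
  assumes nz: "\<forall>k<\<alpha>. v k \<noteq> 0"
  shows "(\<Sum>P\<in>Pow (pairs \<alpha>). (-q)^card P * (\<Prod>k<\<alpha>. v k powi (n + sexp P k)))
      = (\<Prod>k<\<alpha>. v k powi n) * (\<Prod>p\<in>pairs \<alpha>. 1 - q * v (fst p) / v (snd p))"
proof -
  have "(\<Prod>p\<in>pairs \<alpha>. 1 - q * v (fst p) / v (snd p)) = (\<Prod>p\<in>pairs \<alpha>. (-q * v (fst p) / v (snd p)) + 1)"
    by simp
  also have "\<dots> = (\<Sum>P\<in>Pow (pairs \<alpha>). (\<Prod>p\<in>P. -q * v (fst p) / v (snd p)))"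
    by (subst prod_add[OF finite_pairs]) simp
  finally have E: "(\<Prod>p\<in>pairs \<alpha>. 1 - q * v (fst p) / v (snd p)) = \<dots>" .
  have T: "(-q)^card P * (\<Prod>k<\<alpha>. v k powi (n + sexp P k)) = (\<Prod>k<\<alpha>. v k powi n) * (\<Prod>p\<in>P. -q * v (fst p) / v (snd p))"
    if "P \<in> Pow (pairs \<alpha>)" for P
  proof -
    have "(\<Prod>k<\<alpha>. v k powi (n + sexp P k)) = (\<Prod>k<\<alpha>. v k powi n) * (\<Prod>k<\<alpha>. v k powi (sexp P k))"
      using nz by (simp add: power_int_add prod.distrib)
    moreover have "(-q)^card P * (\<Prod>p\<in>P. v (fst p) / v (snd p)) = (\<Prod>p\<in>P. -q) * (\<Prod>p\<in>P. v (fst p) / v (snd p))"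
      by simp
    then have "(-q)^card P * (\<Prod>p\<in>P. v (fst p) / v (snd p)) = (\<Prod>p\<in>P. -q * (v (fst p) / v (snd p)))"
      by (simp only: prod.distrib[symmetric])
    then have "(\<Prod>p\<in>P. -q * v (fst p) / v (snd p)) = (-q)^card P * (\<Prod>p\<in>P. v (fst p) / v (snd p))"
      by simp
    ultimately show ?thesis using sexp_prod[of P \<alpha> v] that nz by simp
  qed
  show ?thesis unfolding E sum_distrib_left by (rule sum.cong[OF refl] T)+
qed



definition DD :: "(nat \<Rightarrow> 'a::field) \<Rightarrow> nat set \<Rightarrow> nat \<Rightarrow> 'a" where
  "DD x I k = (\<Sum>a\<in>I. x a ^ k / (\<Prod>j\<in>I-{a}. x a - x j))"

lemma DD_rec:
  assumes "finite I" "a \<in> I" "inj_on x I"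
  shows "DD x I (Suc k) = x a * DD x I k + DD x (I-{a}) k"
proof -
  have "DD x I (Suc k) - x a * DD x I k = (\<Sum>i\<in>I. x i ^ k * (x i - x a) / (\<Prod>j\<in>I-{i}. x i - x j))"
    unfolding DD_def sum_distrib_left sum_subtractf[symmetric]
    by (rule sum.cong[OF refl]) (simp add: algebra_simps diff_divide_distrib)
  also have "\<dots> = (\<Sum>i\<in>I-{a}. x i ^ k * (x i - x a) / (\<Prod>j\<in>I-{i}. x i - x j))"
    using assms by (subst sum.remove[of I a]) auto
  also have "\<dots> = DD x (I-{a}) k"
    unfolding DD_def
  proof (rule sum.cong[OF refl])
    fix i assume i: "i \<in> I - {a}"
    have ne: "x i - x a \<noteq> 0" using assms i by (auto simp: inj_on_def)
    have "(\<Prod>j\<in>I-{i}. x i - x j) = (x i - x a) * (\<Prod>j\<in>I-{i}-{a}. x i - x j)"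
      using assms i by (subst prod.remove[of "I-{i}" a]) auto
    moreover have "I-{i}-{a} = I-{a}-{i}" by auto
    ultimately show "x i ^ k * (x i - x a) / (\<Prod>j\<in>I-{i}. x i - x j) = x i ^ k / (\<Prod>j\<in>I - {a} - {i}. x i - x j)"
      using ne by simp
  qed
  finally show ?thesis by (simp add: algebra_simps)
qed

lemma DD_main:
  "finite I \<Longrightarrow> inj_on x I \<Longrightarrow> card I = Suc m \<Longrightarrow> (\<forall>k<m. DD x I k = 0) \<and> DD x I m = 1"
proof (induction m arbitrary: I)
  case 0
  then obtain a where "I = {a}" by (auto simp: card_Suc_eq)
  then show ?case by (simp add: DD_def)
next
  case (Suc m)
  obtain a J where aJ: "I = insert a J" "a \<notin> J" "card J = Suc m"
    using Suc.prems(3) unfolding card_Suc_eq[of I "Suc m"] by blast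
  then have "J \<noteq> {}" by auto
  then obtain b where "b \<in> J" by blast
  then have ab: "a \<in> I" "b \<in> I" "a \<noteq> b" using aJ by auto
  have IHa: "(\<forall>k<m. DD x (I-{a}) k = 0) \<and> DD x (I-{a}) m = 1"
    using Suc ab by (intro Suc.IH) (auto simp: inj_on_def)
  have IHb: "(\<forall>k<m. DD x (I-{b}) k = 0) \<and> DD x (I-{b}) m = 1"
    using Suc ab by (intro Suc.IH) (auto simp: inj_on_def)
  have Z: "DD x I k = 0" if "k \<le> m" for k
  proof -
    have "DD x (I-{a}) k = DD x (I-{b}) k"
      using IHa IHb that by (cases "k = m") auto
    moreover have "x a * DD x I k + DD x (I-{a}) k = x b * DD x I k + DD x (I-{b}) k"
      using DD_rec[of I a x k] DD_rec[of I b x k] Suc.prems ab by simp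
    ultimately have "(x a - x b) * DD x I k = 0" by (simp add: algebra_simps)
    moreover have "x a \<noteq> x b" using ab Suc.prems by (auto simp: inj_on_def)
    ultimately show ?thesis by simp
  qed
  have "DD x I (Suc m) = x a * DD x I m + DD x (I-{a}) m"
    using DD_rec[of I a x m] Suc.prems ab by simp
  then have "DD x I (Suc m) = 1" using Z[of m] IHa by simp
  then show ?case using Z by auto
qed

lemma Lag:
  fixes x :: "nat \<Rightarrow> 'a::field"
  assumes "finite I" "I \<noteq> {}" "inj_on x I"
  shows "(\<Sum>a\<in>I. \<Prod>j\<in>I-{a}. x a / (x a - x j)) = 1"
proof -
  obtain m where m: "card I = Suc m" using assms by (cases "card I") auto
  have "(\<Sum>a\<in>I. \<Prod>j\<in>I-{a}. x a / (x a - x j)) = DD x I m"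
    unfolding DD_def
    by (rule sum.cong[OF refl]) (use assms m in \<open>simp add: prod_dividef\<close>)
  then show ?thesis using DD_main[OF assms(1,3) m] by simp
qed

lemma prod_set_nth: "distinct xs \<Longrightarrow> (\<Prod>j\<in>set xs. h j) = (\<Prod>l<length xs. h (xs!l))"
proof -
  assume d: "distinct xs"
  have "set xs = nth xs ` {..<length xs}" by (auto simp: in_set_conv_nth)
  then show ?thesis using d by (simp add: prod.reindex inj_on_nth)
qed

definition GG :: "(nat \<Rightarrow> 'a::field) \<Rightarrow> nat list \<Rightarrow> 'a" where
  "GG x xs = (\<Prod>k<length xs. \<Prod>l\<in>{k<..<length xs}. x (xs!k) / (x (xs!k) - x (xs!l)))"

lemma GG_Cons:
  assumes "distinct (a#r)"
  shows "GG x (a#r) = (\<Prod>j\<in>set r. x a / (x a - x j)) * GG x r"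
proof -
  have im: "{Suc k<..<Suc m} = Suc ` {k<..<m}" for k m :: nat
  proof (rule set_eqI)
    fix y show "y \<in> {Suc k<..<Suc m} \<longleftrightarrow> y \<in> Suc ` {k<..<m}" by (cases y) auto
  qed
  have im0: "{0<..<Suc m} = Suc ` {..<m}" for m :: nat
  proof (rule set_eqI)
    fix y show "y \<in> {0<..<Suc m} \<longleftrightarrow> y \<in> Suc ` {..<m}" by (cases y) auto
  qed
  let ?h = "\<lambda>u v. x u / (x u - x v)"
  have F0: "(\<Prod>l\<in>{0<..<Suc (length r)}. ?h ((a#r)!0) ((a#r)!l)) = (\<Prod>j\<in>set r. x a / (x a - x j))"
  proof -
    have "(\<Prod>l\<in>{0<..<Suc (length r)}. ?h ((a#r)!0) ((a#r)!l)) = (\<Prod>l\<in>Suc ` {..<length r}. ?h ((a#r)!0) ((a#r)!l))"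
      by (simp only: im0)
    also have "\<dots> = (\<Prod>l<length r. ?h a (r!l))"
      by (subst prod.reindex) auto
    also have "\<dots> = (\<Prod>j\<in>set r. x a / (x a - x j))"
      using assms by (simp add: prod_set_nth)
    finally show ?thesis .
  qed
  have FS: "(\<Prod>l\<in>{Suc k<..<Suc (length r)}. ?h ((a#r)!Suc k) ((a#r)!l)) = (\<Prod>l\<in>{k<..<length r}. ?h (r!k) (r!l))" for k
  proof -
    have "(\<Prod>l\<in>{Suc k<..<Suc (length r)}. ?h ((a#r)!Suc k) ((a#r)!l)) = (\<Prod>l\<in>Suc ` {k<..<length r}. ?h ((a#r)!Suc k) ((a#r)!l))"
      by (simp only: im)
    also have "\<dots> = (\<Prod>l\<in>{k<..<length r}. ?h (r!k) (r!l))"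
      by (subst prod.reindex) auto
    finally show ?thesis .
  qed
  have "GG x (a#r) = (\<Prod>k<Suc (length r). \<Prod>l\<in>{k<..<Suc (length r)}. ?h ((a#r)!k) ((a#r)!l))"
    by (simp add: GG_def)
  also have "\<dots> = (\<Prod>l\<in>{0<..<Suc (length r)}. ?h ((a#r)!0) ((a#r)!l)) *
       (\<Prod>k<length r. \<Prod>l\<in>{Suc k<..<Suc (length r)}. ?h ((a#r)!Suc k) ((a#r)!l))"
    by (rule prod.lessThan_Suc_shift)
  also have "\<dots> = (\<Prod>j\<in>set r. x a / (x a - x j)) * GG x r"
    unfolding F0 FS GG_def ..
  finally show ?thesis .
qed

lemma finite_dlists: "finite I \<Longrightarrow> finite {xs. distinct xs \<and> set xs = I}"
  by (rule finite_subset[of _ "{xs. set xs \<subseteq> I \<and> length xs = card I}"])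
     (auto simp: distinct_card finite_lists_length_eq)

lemma Gsum:
  fixes x :: "nat \<Rightarrow> 'a::field"
  shows "finite I \<Longrightarrow> inj_on x I \<Longrightarrow> (\<Sum>xs\<in>{xs. distinct xs \<and> set xs = I}. GG x xs) = 1"
proof (induction "card I" arbitrary: I)
  case 0
  then have "I = {}" by simp
  then have "{xs. distinct xs \<and> set xs = I} = {[]}" by auto
  then show ?case by (simp add: GG_def)
next
  case (Suc m)
  then have ne: "I \<noteq> {}" by auto
  have E: "{xs. distinct xs \<and> set xs = I} = (\<lambda>(a,r). a#r) ` (SIGMA a:I. {r. distinct r \<and> set r = I - {a}})"
  proof (rule set_eqI, rule iffI)
    fix xs assume xs: "xs \<in> {xs. distinct xs \<and> set xs = I}"
    then obtain a r where ar: "xs = a # r" using ne by (cases xs) auto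
    then have "(a, r) \<in> (SIGMA a:I. {r. distinct r \<and> set r = I - {a}})" using xs by auto
    then show "xs \<in> (\<lambda>(a,r). a#r) ` (SIGMA a:I. {r. distinct r \<and> set r = I - {a}})"
      using ar by (intro image_eqI[of _ _ "(a,r)"]) auto
  next
    fix xs assume "xs \<in> (\<lambda>(a,r). a#r) ` (SIGMA a:I. {r. distinct r \<and> set r = I - {a}})"
    then obtain a r where "xs = a # r" "a \<in> I" "distinct r" "set r = I - {a}" by auto
    then show "xs \<in> {xs. distinct xs \<and> set xs = I}" by auto
  qed
  have "(\<Sum>xs\<in>{xs. distinct xs \<and> set xs = I}. GG x xs)
      = (\<Sum>p\<in>(SIGMA a:I. {r. distinct r \<and> set r = I - {a}}). GG x (fst p # snd p))"
    unfolding E by (subst sum.reindex) (auto simp: inj_on_def split_def)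
  also have "\<dots> = (\<Sum>a\<in>I. \<Sum>r\<in>{r. distinct r \<and> set r = I - {a}}. GG x (a # r))"
    using Suc.prems by (subst sum.Sigma) (auto simp: finite_dlists split_def)
  also have "\<dots> = (\<Sum>a\<in>I. (\<Prod>j\<in>I-{a}. x a / (x a - x j)) * (\<Sum>r\<in>{r. distinct r \<and> set r = I - {a}}. GG x r))"
    by (rule sum.cong[OF refl]) (auto simp: GG_Cons sum_distrib_left intro!: sum.cong)
  also have "\<dots> = (\<Sum>a\<in>I. (\<Prod>j\<in>I-{a}. x a / (x a - x j)))"
  proof (rule sum.cong[OF refl])
    fix a assume a: "a \<in> I"
    have "(\<Sum>r\<in>{r. distinct r \<and> set r = I - {a}}. GG x r) = 1"
      using Suc a by (intro Suc.hyps) (auto intro: inj_on_subset)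
    then show "(\<Prod>j\<in>I-{a}. x a / (x a - x j)) * (\<Sum>r\<in>{r. distinct r \<and> set r = I - {a}}. GG x r) = (\<Prod>j\<in>I-{a}. x a / (x a - x j))"
      by simp
  qed
  also have "\<dots> = 1" using Lag Suc.prems ne by blast
  finally show ?case .
qed



lemma gen_facts:
  assumes "generic_pt q N x"
  shows "q \<noteq> 0" "\<And>i. i < N \<Longrightarrow> x i \<noteq> 0"
    "\<And>i j. i < N \<Longrightarrow> j < N \<Longrightarrow> i \<noteq> j \<Longrightarrow> x i \<noteq> x j"
    "\<And>i j. i < N \<Longrightarrow> j < N \<Longrightarrow> i \<noteq> j \<Longrightarrow> x i \<noteq> q * x j"
proof -
  show "q \<noteq> 0" "\<And>i. i < N \<Longrightarrow> x i \<noteq> 0" using assms by (auto simp: generic_pt_def)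
  show "\<And>i j. i < N \<Longrightarrow> j < N \<Longrightarrow> i \<noteq> j \<Longrightarrow> x i \<noteq> x j"
    using assms unfolding generic_pt_def by (metis le0 mult_1 power_0)
  fix i j assume "i < N" "j < N" "i \<noteq> j"
  then have "q ^ 0 * x i \<noteq> q ^ 1 * x j" using assms unfolding generic_pt_def
    by (metis One_nat_def Suc_leI le0 order_le_less_trans)
  then show "x i \<noteq> q * x j" by simp
qed

lemma count_distinct: "distinct xs \<Longrightarrow> count_list xs c = (if c \<in> set xs then 1 else 0)"
  by (induction xs) auto

lemma mem_take: "distinct xs \<Longrightarrow> l < length xs \<Longrightarrow> (xs!l \<in> set (take k xs)) = (l < k)"
  by (auto simp: in_set_conv_nth nth_eq_iff_index_eq)

lemma TT_prod: "TT q N y xs = (\<Prod>k<length xs. cM N (pt q y (take k xs)) (xs!k))"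
proof (induction xs arbitrary: y)
  case Nil then show ?case by simp
next
  case (Cons i xs)
  show ?case
    by (simp only: length_Cons prod.lessThan_Suc_shift) (simp add: Cons.IH pt_Cons[symmetric])
qed

lemma distinct_take_least:
  "(\<forall>l'<l. l' < length xs \<longrightarrow> xs!l' \<notin> set (take l' xs)) \<Longrightarrow> distinct (take l xs)"
proof (induction l)
  case 0 then show ?case by simp
next
  case (Suc l)
  show ?case
  proof (cases "l < length xs")
    case True
    then show ?thesis using Suc by (simp add: take_Suc_conv_app_nth)
  next
    case False
    then show ?thesis using Suc by simp
  qed
qed

lemma first_repeat:
  assumes "\<not> distinct xs"
  shows "\<exists>k l. k < l \<and> l < length xs \<and> xs!k = xs!l \<and>
     count_list (take l xs) (xs!l) = Suc (count_list (take k xs) (xs!k))"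
proof -
  let ?P = "\<lambda>l. l < length xs \<and> xs!l \<in> set (take l xs)"
  obtain i j where ij: "i < length xs" "j < length xs" "i \<noteq> j" "xs!i = xs!j"
    using assms by (auto simp: distinct_conv_nth)
  have "\<exists>l. ?P l"
  proof (cases "i < j")
    case True
    then have "xs!j \<in> set (take j xs)" using ij by (auto simp: in_set_conv_nth intro!: exI[of _ i])
    then show ?thesis using ij by blast
  next
    case False
    then have "xs!i \<in> set (take i xs)" using ij by (auto simp: in_set_conv_nth intro!: exI[of _ j])
    then show ?thesis using ij by blast
  qed
  define l where "l = (LEAST l. ?P l)"
  have Pl: "?P l" unfolding l_def using \<open>\<exists>l. ?P l\<close> by (rule LeastI_ex)
  have "\<forall>l'<l. l' < length xs \<longrightarrow> xs!l' \<notin> set (take l' xs)"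
    using not_less_Least unfolding l_def by blast
  then have dl: "distinct (take l xs)" by (rule distinct_take_least)
  from Pl obtain k where k: "k < l" "xs!k = xs!l"
    by (auto simp: in_set_conv_nth)
  have c1: "count_list (take l xs) (xs!l) = 1" using dl Pl by (simp add: count_distinct)
  have "take (Suc k) xs = take (Suc k) (take l xs)" using k by (simp add: min_def)
  then have "distinct (take (Suc k) xs)" using dl by (metis distinct_take)
  moreover have "take (Suc k) xs = take k xs @ [xs!k]" using k Pl by (simp add: take_Suc_conv_app_nth)
  ultimately have "xs!k \<notin> set (take k xs)" by simp
  then have c0: "count_list (take k xs) (xs!k) = 0" by simp
  show ?thesis using k Pl c1 c0 by (intro exI[of _ k] exI[of _ l]) auto
qed

lemma vv_eq: "vv q y xs k = q ^ count_list (take k xs) (xs!k) * y (xs!k)"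
  by (simp add: vv_def pt_def)

lemma vv_nz:
  assumes "generic_pt q N x" "set xs \<subseteq> {..<N}" "k < length xs"
  shows "vv q x xs k \<noteq> 0"
proof -
  have "xs!k < N" using nth_mem[OF assms(3)] assms(2) by auto
  then show ?thesis using gen_facts[OF assms(1)] by (auto simp: vv_eq)
qed

lemma nondist_zero:
  assumes "generic_pt q N x" "set xs \<subseteq> {..<N}" "\<not> distinct xs"
  shows "(\<Prod>p\<in>pairs (length xs). 1 - q * vv q x xs (fst p) / vv q x xs (snd p)) = 0"
proof -
  obtain k l where kl: "k < l" "l < length xs" "xs!k = xs!l"
     "count_list (take l xs) (xs!l) = Suc (count_list (take k xs) (xs!k))"
    using first_repeat[OF assms(3)] by blast
  have q: "q \<noteq> 0" and xn: "x (xs!l) \<noteq> 0"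
  proof -
    have "xs!l < N" using nth_mem[OF kl(2)] assms(2) by auto
    then show "q \<noteq> 0" "x (xs!l) \<noteq> 0" using gen_facts[OF assms(1)] by auto
  qed
  have "1 - q * vv q x xs k / vv q x xs l = 0"
    using kl q xn by (simp add: vv_eq)
  moreover have "(k,l) \<in> pairs (length xs)" using kl by (simp add: pairs_def)
  ultimately show ?thesis using finite_pairs by (intro prod_zero) force+
qed

lemma power_int_prod: "finite A \<Longrightarrow> (\<Prod>i\<in>A. f i) powi n = (\<Prod>i\<in>A. (f i :: 'a::field) powi n)"
  by (induction A rule: finite_induct) (auto simp: power_int_mult_distrib)

lemma pair_alg0:
  fixes a b q :: "'a::field"
  assumes "b \<noteq> 0" "b - q * a \<noteq> 0"
  shows "(1 - q * a / b) * c * (b / (b - q * a)) = c"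
proof -
  have "1 - q * a / b = (b - q * a) / b" using assms by (simp add: field_simps)
  then have "(1 - q * a / b) * (b / (b - q * a)) = 1" using assms by simp
  moreover have "\<And>X Y c :: 'a. X * Y = 1 \<Longrightarrow> X * c * Y = c"
    by (metis mult.assoc mult.commute mult_1_right)
  ultimately show ?thesis by blast
qed

lemma pair_alg:
  fixes w :: "nat \<Rightarrow> 'a::field"
  assumes nz: "\<And>k. k < m \<Longrightarrow> w k \<noteq> 0"
    and d1: "\<And>k l. k < m \<Longrightarrow> l < m \<Longrightarrow> k \<noteq> l \<Longrightarrow> w k \<noteq> w l"
    and d2: "\<And>k l. k < m \<Longrightarrow> l < m \<Longrightarrow> k \<noteq> l \<Longrightarrow> w l \<noteq> q * w k"
  shows "(\<Prod>p\<in>pairs m. 1 - q * w (fst p) / w (snd p)) *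
       (\<Prod>k<m. \<Prod>l\<in>{..<m}-{k}. w k / (w k - (if l < k then q * w l else w l)))
     = (\<Prod>k<m. \<Prod>l\<in>{k<..<m}. w k / (w k - w l))"
proof -
  let ?h = "\<lambda>k l. w k / (w k - (if l < k then q * w l else w l))"
  have S1: "(SIGMA k:{..<m}. {..<m}-{k}) = pairs m \<union> (\<lambda>(k,l). (l,k)) ` pairs m"
    by (auto simp: pairs_def image_iff)
  have disj: "pairs m \<inter> (\<lambda>(k,l). (l,k)) ` pairs m = {}"
    by (auto simp: pairs_def)
  have fin2: "finite ((\<lambda>(k,l). (l,k)) ` pairs m)" using finite_pairs by simp
  have "(\<Prod>k<m. \<Prod>l\<in>{..<m}-{k}. ?h k l) = prod (case_prod ?h) (SIGMA k:{..<m}. {..<m}-{k})"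
    by (rule prod.Sigma) auto
  also have "\<dots> = prod (case_prod ?h) (pairs m) * prod (case_prod ?h) ((\<lambda>(k,l). (l,k)) ` pairs m)"
    unfolding S1 by (rule prod.union_disjoint[OF finite_pairs fin2 disj])
  also have "prod (case_prod ?h) ((\<lambda>(k,l). (l,k)) ` pairs m) = (\<Prod>p\<in>pairs m. ?h (snd p) (fst p))"
    apply (subst prod.reindex)
     apply (auto simp: inj_on_def)[1]
    apply (rule prod.cong[OF refl])
    by (auto split: prod.splits)
  finally have L: "(\<Prod>k<m. \<Prod>l\<in>{..<m}-{k}. ?h k l) = prod (case_prod ?h) (pairs m) * (\<Prod>p\<in>pairs m. ?h (snd p) (fst p))" .
  have S2: "(SIGMA k:{..<m}. {k<..<m}) = pairs m" by (auto simp: pairs_def)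
  have R: "(\<Prod>k<m. \<Prod>l\<in>{k<..<m}. w k / (w k - w l)) = (\<Prod>p\<in>pairs m. w (fst p) / (w (fst p) - w (snd p)))"
    by (subst prod.Sigma) (auto simp: S2 split_def)
  show ?thesis
    unfolding L R prod.distrib[symmetric] mult.assoc[symmetric]
  proof (rule prod.cong[OF refl])
    fix p assume "p \<in> pairs m"
    then obtain k l where p: "p = (k,l)" "k < l" "l < m" by (auto simp: pairs_def)
    have a: "w l \<noteq> 0" "w k - w l \<noteq> 0" "w l - q * w k \<noteq> 0"
      using nz d1 d2 p by auto
    show "(1 - q * w (fst p) / w (snd p)) * case_prod ?h p * ?h (snd p) (fst p) = w (fst p) / (w (fst p) - w (snd p))"
      using p a pair_alg0[of "w l" q "w k" "w k / (w k - w l)"] by simp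
  qed
qed



lemma pt_take_dist:
  "distinct xs \<Longrightarrow> pt q y (take k xs) j = (if j \<in> set (take k xs) then q * y j else y j)"
  by (simp add: pt_def count_distinct)

lemma pt_Gamma: "distinct xs \<Longrightarrow> f (pt q x xs) = Gamma q (set xs) f x"
  unfolding Gamma_def pt_def by (rule arg_cong[where f=f]) (auto simp: count_distinct)

lemma cM_split:
  assumes d: "distinct xs" and s: "set xs \<subseteq> {..<N}" and k: "k < length xs"
  shows "cM N (pt q x (take k xs)) (xs!k) =
     (\<Prod>j\<in>{..<N}-set xs. x (xs!k) / (x (xs!k) - x j)) *
     (\<Prod>l\<in>{..<length xs}-{k}. x (xs!k) / (x (xs!k) - (if l < k then q * x (xs!l) else x (xs!l))))"
proof -
  let ?a = "xs!k"
  let ?y = "pt q x (take k xs)"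
  have ya: "?y ?a = x ?a" using d k by (simp add: pt_take_dist mem_take)
  have a: "?a \<in> set xs" using k by simp
  have U: "{..<N}-{?a} = ({..<N}-set xs) \<union> (set xs - {?a})" using s a by auto
  have "cM N ?y ?a = (\<Prod>j\<in>{..<N}-set xs. ?y ?a / (?y ?a - ?y j)) * (\<Prod>j\<in>set xs - {?a}. ?y ?a / (?y ?a - ?y j))"
    unfolding cM_def U by (rule prod.union_disjoint) auto
  also have "(\<Prod>j\<in>{..<N}-set xs. ?y ?a / (?y ?a - ?y j)) = (\<Prod>j\<in>{..<N}-set xs. x ?a / (x ?a - x j))"
  proof (rule prod.cong[OF refl])
    fix j assume "j \<in> {..<N} - set xs"
    then have "j \<notin> set (take k xs)" using set_take_subset by fastforce
    then show "?y ?a / (?y ?a - ?y j) = x ?a / (x ?a - x j)" using ya d by (simp add: pt_take_dist)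
  qed
  also have "(\<Prod>j\<in>set xs - {?a}. ?y ?a / (?y ?a - ?y j)) =
     (\<Prod>l\<in>{..<length xs}-{k}. x ?a / (x ?a - (if l < k then q * x (xs!l) else x (xs!l))))"
  proof -
    have im: "set xs - {?a} = nth xs ` ({..<length xs}-{k})"
      using d k by (auto simp: in_set_conv_nth nth_eq_iff_index_eq image_iff)
    have inj: "inj_on (nth xs) ({..<length xs}-{k})" using d by (intro inj_on_nth) auto
    show ?thesis unfolding im prod.reindex[OF inj]
    proof (rule prod.cong[OF refl])
      fix l assume l: "l \<in> {..<length xs}-{k}"
      have "?y (xs!l) = (if l < k then q * x (xs!l) else x (xs!l))"
        using d l by (simp add: pt_take_dist mem_take)
      then show "((\<lambda>j. ?y ?a / (?y ?a - ?y j)) \<circ> (!) xs) l = x ?a / (x ?a - (if l < k then q * x (xs!l) else x (xs!l)))"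
        using ya by simp
    qed
  qed
  finally show ?thesis .
qed

lemma dist_term:
  assumes g: "generic_pt q N x" and s: "set xs \<subseteq> {..<N}" and d: "distinct xs"
  shows "(\<Prod>k<length xs. vv q x xs k powi n) *
         (\<Prod>p\<in>pairs (length xs). 1 - q * vv q x xs (fst p) / vv q x xs (snd p)) * TT q N x xs
       = x_I (set xs) x powi n * (\<Prod>i\<in>set xs. \<Prod>j\<in>{..<N}-set xs. x i / (x i - x j)) * GG x xs"
proof -
  let ?m = "length xs"
  define w where "w k = x (xs!k)" for k
  have vv: "vv q x xs k = w k" if "k < ?m" for k
    using d that by (simp add: vv_eq w_def count_distinct mem_take)
  have lt: "xs!k < N" if "k < ?m" for k using s nth_mem[OF that] by auto
  note gf = gen_facts[OF g]
  have P1: "(\<Prod>k<?m. vv q x xs k powi n) = x_I (set xs) x powi n"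
    unfolding x_I_def using d by (simp add: power_int_prod prod_set_nth vv w_def)
  have P2: "(\<Prod>p\<in>pairs ?m. 1 - q * vv q x xs (fst p) / vv q x xs (snd p)) =
            (\<Prod>p\<in>pairs ?m. 1 - q * w (fst p) / w (snd p))"
    by (rule prod.cong[OF refl]) (auto simp: pairs_def vv)
  have P3: "TT q N x xs = (\<Prod>k<?m. \<Prod>j\<in>{..<N}-set xs. x (xs!k) / (x (xs!k) - x j)) *
       (\<Prod>k<?m. \<Prod>l\<in>{..<?m}-{k}. w k / (w k - (if l < k then q * w l else w l)))"
    unfolding TT_prod prod.distrib[symmetric] w_def
    by (rule prod.cong[OF refl]) (use d s in \<open>simp only: cM_split lessThan_iff\<close>)
  have P4: "(\<Prod>k<?m. \<Prod>j\<in>{..<N}-set xs. x (xs!k) / (x (xs!k) - x j)) =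
            (\<Prod>i\<in>set xs. \<Prod>j\<in>{..<N}-set xs. x i / (x i - x j))"
    using d by (simp add: prod_set_nth)
  have PA: "(\<Prod>p\<in>pairs ?m. 1 - q * w (fst p) / w (snd p)) *
       (\<Prod>k<?m. \<Prod>l\<in>{..<?m}-{k}. w k / (w k - (if l < k then q * w l else w l)))
     = GG x xs"
    unfolding GG_def w_def[symmetric]
  proof (rule pair_alg)
    show "w k \<noteq> 0" if "k < ?m" for k using gf lt that by (simp add: w_def)
    show "w k \<noteq> w l" if "k < ?m" "l < ?m" "k \<noteq> l" for k l
      using gf lt that d by (simp add: w_def nth_eq_iff_index_eq)
    show "w l \<noteq> q * w k" if "k < ?m" "l < ?m" "k \<noteq> l" for k l
      using gf lt that d by (simp add: w_def nth_eq_iff_index_eq)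
  qed
  show ?thesis unfolding P1 P2 P3 P4 PA[symmetric] by (simp add: ac_simps)
qed



lemma Mprod_eq: "Mprod q N \<alpha> n S f x = (\<Sum>xs\<in>LL N \<alpha>.
      (\<Prod>k<\<alpha>. vv q x xs k powi (n + S k)) * TT q N x xs * f (pt q x xs))"
proof -
  have "Mprod q N \<alpha> n S f = Mlist q N (map (\<lambda>k. n + S k) [0..<\<alpha>]) f"
    unfolding Mprod_def Mlist_def by (simp add: foldr_map comp_def)
  then show ?thesis by (simp add: Mlist_expand)
qed

theorem theorem4p5:
  fixes q :: "'a::field" and N \<alpha> :: nat and n :: int
    and f :: "(nat \<Rightarrow> 'a) \<Rightarrow> 'a" and x :: "nat \<Rightarrow> 'a"
  assumes "1 \<le> \<alpha>" and "\<alpha> \<le> N"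
    and "symmetric_fun N f"
    and "generic_pt q N x"
  shows "Mop q N \<alpha> n f x = (\<Sum>S\<in>suppS \<alpha>. coeffS q \<alpha> S * Mprod q N \<alpha> n S f x)"
proof -
  note g = assms(4)
  let ?G = "\<lambda>S. Mprod q N \<alpha> n S f x"
  let ?F = "\<lambda>I. x_I I x powi n * (\<Prod>i\<in>I. \<Prod>j\<in>{..<N}-I. x i / (x i - x j)) * Gamma q I f x"
  have finPow: "finite (Pow (pairs \<alpha>))" using finite_pairs by simp
  have "(\<Sum>S\<in>suppS \<alpha>. coeffS q \<alpha> S * ?G S) = (\<Sum>P\<in>Pow (pairs \<alpha>). (-q)^card P * ?G (sexp P))"
  proof -
    have "(\<Sum>P\<in>Pow (pairs \<alpha>). (-q)^card P * ?G (sexp P)) =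
        (\<Sum>S\<in>sexp ` Pow (pairs \<alpha>). \<Sum>P\<in>{P. P \<in> Pow (pairs \<alpha>) \<and> sexp P = S}. (-q)^card P * ?G (sexp P))"
      by (rule sum.image_gen[OF finPow])
    also have "\<dots> = (\<Sum>S\<in>suppS \<alpha>. coeffS q \<alpha> S * ?G S)"
      unfolding suppS_def coeffS_def sum_distrib_right
      by (rule sum.cong[OF refl], rule sum.cong) auto
    finally show ?thesis by simp
  qed
  also have "\<dots> = (\<Sum>xs\<in>LL N \<alpha>. (\<Sum>P\<in>Pow (pairs \<alpha>). (-q)^card P * (\<Prod>k<\<alpha>. vv q x xs k powi (n + sexp P k)))
                     * TT q N x xs * f (pt q x xs))"
    unfolding Mprod_eq sum_distrib_left sum_distrib_right
    by (subst sum.swap) (simp add: ac_simps)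
  also have "\<dots> = (\<Sum>xs\<in>LL N \<alpha>. (\<Prod>k<\<alpha>. vv q x xs k powi n) *
         (\<Prod>p\<in>pairs \<alpha>. 1 - q * vv q x xs (fst p) / vv q x xs (snd p)) * TT q N x xs * f (pt q x xs))"
  proof (rule sum.cong[OF refl])
    fix xs assume xs: "xs \<in> LL N \<alpha>"
    have "\<forall>k<\<alpha>. vv q x xs k \<noteq> 0" using vv_nz[OF g] xs by (auto simp: LL_def)
    then show "(\<Sum>P\<in>Pow (pairs \<alpha>). (-q)^card P * (\<Prod>k<\<alpha>. vv q x xs k powi (n + sexp P k))) * TT q N x xs * f (pt q x xs)
        = (\<Prod>k<\<alpha>. vv q x xs k powi n) * (\<Prod>p\<in>pairs \<alpha>. 1 - q * vv q x xs (fst p) / vv q x xs (snd p)) * TT q N x xs * f (pt q x xs)"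
      by (simp add: Psum)
  qed
  also have "\<dots> = (\<Sum>xs\<in>{xs\<in>LL N \<alpha>. distinct xs}. ?F (set xs) * GG x xs)"
  proof (rule sum.mono_neutral_cong_right)
    show "finite (LL N \<alpha>)" by (rule finite_LL)
    show "{xs\<in>LL N \<alpha>. distinct xs} \<subseteq> LL N \<alpha>" by auto
  next
    show "\<forall>xs\<in>LL N \<alpha> - {xs\<in>LL N \<alpha>. distinct xs}. (\<Prod>k<\<alpha>. vv q x xs k powi n) *
         (\<Prod>p\<in>pairs \<alpha>. 1 - q * vv q x xs (fst p) / vv q x xs (snd p)) * TT q N x xs * f (pt q x xs) = 0"
    proof
      fix xs assume "xs \<in> LL N \<alpha> - {xs\<in>LL N \<alpha>. distinct xs}"
      then have "set xs \<subseteq> {..<N}" "\<not> distinct xs" "length xs = \<alpha>" by (auto simp: LL_def)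
      then show "(\<Prod>k<\<alpha>. vv q x xs k powi n) *
           (\<Prod>p\<in>pairs \<alpha>. 1 - q * vv q x xs (fst p) / vv q x xs (snd p)) * TT q N x xs * f (pt q x xs) = 0"
        using nondist_zero[OF g] by auto
    qed
  next
    fix xs assume "xs \<in> {xs\<in>LL N \<alpha>. distinct xs}"
    then have s: "set xs \<subseteq> {..<N}" "distinct xs" "length xs = \<alpha>" by (auto simp: LL_def)
    show "(\<Prod>k<\<alpha>. vv q x xs k powi n) *
         (\<Prod>p\<in>pairs \<alpha>. 1 - q * vv q x xs (fst p) / vv q x xs (snd p)) * TT q N x xs * f (pt q x xs) = ?F (set xs) * GG x xs"
      using dist_term[OF g s(1,2), of n] s pt_Gamma[OF s(2), of f q x] by (simp add: ac_simps)
  qed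
  also have "\<dots> = (\<Sum>I\<in>set ` {xs\<in>LL N \<alpha>. distinct xs}. \<Sum>xs\<in>{xs'. xs' \<in> {xs\<in>LL N \<alpha>. distinct xs} \<and> set xs' = I}. ?F (set xs) * GG x xs)"
    by (rule sum.image_gen) (simp add: finite_LL)
  also have "\<dots> = (\<Sum>I\<in>{I. I \<subseteq> {..<N} \<and> card I = \<alpha>}. ?F I * (\<Sum>xs\<in>{xs. distinct xs \<and> set xs = I}. GG x xs))"
  proof -
    have im: "set ` {xs\<in>LL N \<alpha>. distinct xs} = {I. I \<subseteq> {..<N} \<and> card I = \<alpha>}"
    proof (rule set_eqI, rule iffI)
      fix I assume "I \<in> set ` {xs\<in>LL N \<alpha>. distinct xs}"
      then show "I \<in> {I. I \<subseteq> {..<N} \<and> card I = \<alpha>}" by (auto simp: LL_def distinct_card)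
    next
      fix I assume I: "I \<in> {I. I \<subseteq> {..<N} \<and> card I = \<alpha>}"
      then have "finite I" using finite_subset by blast
      then obtain xs where "set xs = I" "distinct xs" using finite_distinct_list by blast
      then show "I \<in> set ` {xs\<in>LL N \<alpha>. distinct xs}" using I
        by (auto simp: LL_def distinct_card image_iff intro!: exI[of _ xs])
    qed
    show ?thesis unfolding im
    proof (rule sum.cong[OF refl])
      fix I assume I: "I \<in> {I. I \<subseteq> {..<N} \<and> card I = \<alpha>}"
      have "{xs'. xs' \<in> {xs\<in>LL N \<alpha>. distinct xs} \<and> set xs' = I} = {xs. distinct xs \<and> set xs = I}"
        using I by (auto simp: LL_def distinct_card)
      then show "(\<Sum>xs\<in>{xs'. xs' \<in> {xs\<in>LL N \<alpha>. distinct xs} \<and> set xs' = I}. ?F (set xs) * GG x xs)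
          = ?F I * (\<Sum>xs\<in>{xs. distinct xs \<and> set xs = I}. GG x xs)"
        by (simp add: sum_distrib_left)
    qed
  qed
  also have "\<dots> = (\<Sum>I\<in>{I. I \<subseteq> {..<N} \<and> card I = \<alpha>}. ?F I)"
  proof (rule sum.cong[OF refl])
    fix I assume I: "I \<in> {I. I \<subseteq> {..<N} \<and> card I = \<alpha>}"
    have fI: "finite I" using I finite_subset by blast
    have "inj_on x I" using gen_facts(3)[OF g] I by (auto simp: inj_on_def)
    then have "(\<Sum>xs\<in>{xs. distinct xs \<and> set xs = I}. GG x xs) = 1" by (rule Gsum[OF fI])
    then show "?F I * (\<Sum>xs\<in>{xs. distinct xs \<and> set xs = I}. GG x xs) = ?F I"
      by simp
  qed
  also have "\<dots> = Mop q N \<alpha> n f x" by (simp add: Mop_def)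
  finally show ?thesis by simp
qed


end
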